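(* Assume the setting and assumptions (A1)–(A5) described in the context, and assume additionally that the push-forward measures $\iota_n(M_n)$ converge weakly to a probability measure $P$ on $\bar L$. Then the operator $A:\mathcal F\to\mathcal F$ is symmetric with respect to the inner product $(f,g)=\int_{\bar L}fg\,dP$, i.e. $\int (Af)g\,dP=\int f(Ag)\,dP$ for all $f,g\in\mathcal F$.
   Context: $L=\bigsqcup_{n\ge0}L_n$ is a graded set with $L_0$ a singleton and each $L_n$ finite; $p^\downarrow:L\times L\to[0,\infty)$ vanishes unless $|\lambda|=|\mu|+1$ and $\sum_{\mu\in L_{|\lambda|-1}}p^\downarrow(\lambda,\mu)=1$ for $|\lambda|\ge1$. $\{M_n\}$ is a coherent system (probability measures on $L_n$ with $\sum_{\lambda\in L_n}M_n(\lambda)p^\downarrow(\lambda,\mu)=M_{n-1}(\mu)$) with $M_n(\lambda)>0$ everywhere; $p^\uparrow(\lambda,\nu)=\frac{M_{n+1}(\nu)}{M_n(\lambda)}p^\downarrow(\nu,\lambda)$; $(T_ng)(\lambda)=\sum_{\nu\in L_{n+1}}p^\uparrow(\lambda,\nu)\sum_{\tilde\lambda\in L_n}p^\downarrow(\nu,\tilde\lambda)g(\tilde\lambda)$ on real functions on $L_n$ (norm $\|g\|_n=\sup|g|$). $\bar L$ is a topological space, $\iota_n:L_n\to\bar L$ injective, $\pi_n:C(\bar L)\to C(L_n)$, $(\pi_nf)(\lambda)=f(\iota_n(\lambda))$, $C(\bar L)$ with sup norm. Assumptions: (A1) $\bar L$ compact metrizable separable; (A2) every nonempty open set meets $\iota_n(L_n)$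 for all large $n$; (A3) there is a dense subspace $\mathcal F\subset C(\bar L)$ with an exhaustive ascending sequence of finite-dimensional subspaces $\mathcal F^m$ such that for each $m$ and all large $n$, $\pi_n$ is injective on $\mathcal F^m$ and $\pi_n(\mathcal F^m)$ is $T_n$-invariant; (A4) there are $\varepsilon_n>0$, $\varepsilon_n\to0$, such that for $f\in\mathcal F^m$ the elements $g_n\in\mathcal F^m$ with $\pi_n(g_n)=\varepsilon_n^{-1}(T_n-\mathbf 1)\pi_n f$ converge in $\mathcal F^m$ to a limit $Af$, defining $A:\mathcal F\to\mathcal F$; (A5) $1\in\mathcal F$. *)

theory Defs
  imports "HOL-Probability.Probability"
begin

definition pup :: "(nat \<Rightarrow> 'a \<Rightarrow> real) \<Rightarrow> ('a \<Rightarrow> 'a \<Rightarrow> real) \<Rightarrow> nat \<Rightarrow> 'a \<Rightarrow> 'a \<Rightarrow> real" where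
  "pup M pdown n lam nu = M (Suc n) nu / M n lam * pdown nu lam"

text \<open>The operator T_n on real functions on L_n (functions are 'a => real, only values on L_n matter).\<close>
definition Top :: "(nat \<Rightarrow> 'a set) \<Rightarrow> (nat \<Rightarrow> 'a \<Rightarrow> real) \<Rightarrow> ('a \<Rightarrow> 'a \<Rightarrow> real)
    \<Rightarrow> nat \<Rightarrow> ('a \<Rightarrow> real) \<Rightarrow> 'a \<Rightarrow> real" where
  "Top L M pdown n g lam =
     (\<Sum>nu\<in>L (Suc n). pup M pdown n lam nu * (\<Sum>lam'\<in>L n. pdown nu lam' * g lam'))"

definition proj :: "(nat \<Rightarrow> 'a \<Rightarrow> 'b) \<Rightarrow> nat \<Rightarrow> ('b \<Rightarrow> real) \<Rightarrow> 'a \<Rightarrow> real" where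
  "proj \<iota> n f lam = f (\<iota> n lam)"

definition fspan :: "('b \<Rightarrow> real) set \<Rightarrow> ('b \<Rightarrow> real) set" where
  "fspan B = {(\<lambda>x. \<Sum>b\<in>B. c b * b x) | c. True}"

end

theory Submission
  imports Defs
begin


lemma fspan_lin:
  assumes "g \<in> fspan B" "f \<in> fspan B"
  shows "(\<lambda>x. (g x - f x) / (c::real)) \<in> fspan B"
proof -
  obtain a where a: "g = (\<lambda>x. \<Sum>b\<in>B. a b * b x)" using assms(1) unfolding fspan_def by blast
  obtain d where d: "f = (\<lambda>x. \<Sum>b\<in>B. d b * b x)" using assms(2) unfolding fspan_def by blast
  have "(\<lambda>x. (g x - f x) / c) = (\<lambda>x. \<Sum>b\<in>B. ((a b - d b) / c) * b x)"
    by (rule ext) (simp add: a d sum_subtractf[symmetric] sum_divide_distrib algebra_simps)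
  then show ?thesis unfolding fspan_def by (auto intro!: exI[of _ "\<lambda>b. (a b - d b) / c"])
qed

lemma Top_sym:
  assumes fin: "finite (L n)" "finite (L (Suc n))"
    and Mpos: "\<And>lam. lam \<in> L n \<Longrightarrow> M n lam > 0"
  shows "(\<Sum>lam\<in>L n. M n lam * Top L M pdown n h lam * k lam) =
     (\<Sum>nu\<in>L (Suc n). M (Suc n) nu * (\<Sum>l\<in>L n. pdown nu l * h l) * (\<Sum>l\<in>L n. pdown nu l * k l))"
proof -
  have "(\<Sum>lam\<in>L n. M n lam * Top L M pdown n h lam * k lam) =
    (\<Sum>lam\<in>L n. \<Sum>nu\<in>L (Suc n). M (Suc n) nu * (\<Sum>l\<in>L n. pdown nu l * h l) * (pdown nu lam * k lam))"
  proof (rule sum.cong[OF refl])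
    fix lam assume "lam \<in> L n"
    then have p: "M n lam \<noteq> 0" using Mpos by force
    show "M n lam * Top L M pdown n h lam * k lam =
      (\<Sum>nu\<in>L (Suc n). M (Suc n) nu * (\<Sum>l\<in>L n. pdown nu l * h l) * (pdown nu lam * k lam))"
      unfolding Top_def pup_def sum_distrib_left sum_distrib_right
      by (rule sum.cong[OF refl]) (use p in \<open>simp add: field_simps\<close>)
  qed
  also have "\<dots> = (\<Sum>nu\<in>L (Suc n). \<Sum>lam\<in>L n. M (Suc n) nu * (\<Sum>l\<in>L n. pdown nu l * h l) * (pdown nu lam * k lam))"
    by (rule sum.swap)
  also have "\<dots> = (\<Sum>nu\<in>L (Suc n). M (Suc n) nu * (\<Sum>l\<in>L n. pdown nu l * h l) * (\<Sum>l\<in>L n. pdown nu l * k l))"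
    by (simp add: sum_distrib_left)
  finally show ?thesis .
qed

lemma Top_sym2:
  assumes fin: "finite (L n)" "finite (L (Suc n))"
    and Mpos: "\<And>lam. lam \<in> L n \<Longrightarrow> M n lam > 0"
  shows "(\<Sum>lam\<in>L n. M n lam * ((Top L M pdown n h lam - h lam) / e) * k lam) =
     (\<Sum>lam\<in>L n. M n lam * h lam * ((Top L M pdown n k lam - k lam) / e))"
proof -
  have s1: "(\<Sum>lam\<in>L n. M n lam * Top L M pdown n h lam * k lam) = (\<Sum>lam\<in>L n. M n lam * Top L M pdown n k lam * h lam)"
    using Top_sym[where L=L and n=n and M=M and pdown=pdown and h=h and k=k, OF assms] Top_sym[where L=L and n=n and M=M and pdown=pdown and h=k and k=h, OF assms] by (simp add: mult_ac)
  have "(\<Sum>lam\<in>L n. M n lam * ((Top L M pdown n h lam - h lam) / e) * k lam) =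
      ((\<Sum>lam\<in>L n. M n lam * Top L M pdown n h lam * k lam) - (\<Sum>lam\<in>L n. M n lam * h lam * k lam)) / e"
    by (simp add: sum_subtractf[symmetric] sum_divide_distrib algebra_simps diff_divide_distrib)
  also have "\<dots> = ((\<Sum>lam\<in>L n. M n lam * Top L M pdown n k lam * h lam) - (\<Sum>lam\<in>L n. M n lam * k lam * h lam)) / e"
    unfolding s1 by (simp add: mult_ac)
  also have "\<dots> = (\<Sum>lam\<in>L n. M n lam * h lam * ((Top L M pdown n k lam - k lam) / e))"
    by (simp add: sum_subtractf[symmetric] sum_divide_distrib algebra_simps diff_divide_distrib)
  finally show ?thesis .
qed

lemma wsum_bound:
  fixes M u v :: "'a \<Rightarrow> real"
  assumes "finite S" "\<And>x. x \<in> S \<Longrightarrow> M x \<ge> 0" "sum M S = 1"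
    "\<And>x. x \<in> S \<Longrightarrow> \<bar>u x\<bar> \<le> e" "\<And>x. x \<in> S \<Longrightarrow> \<bar>v x\<bar> \<le> B"
  shows "\<bar>\<Sum>x\<in>S. M x * u x * v x\<bar> \<le> e * B"
proof -
  have "\<bar>\<Sum>x\<in>S. M x * u x * v x\<bar> \<le> (\<Sum>x\<in>S. \<bar>M x * u x * v x\<bar>)" by (rule sum_abs)
  also have "\<dots> \<le> (\<Sum>x\<in>S. M x * (e * B))"
  proof (rule sum_mono)
    fix x assume x: "x \<in> S"
    have "\<bar>u x * v x\<bar> \<le> e * B" unfolding abs_mult
      using assms(4,5)[OF x] by (meson abs_ge_zero mult_mono order_trans)
    then show "\<bar>M x * u x * v x\<bar> \<le> M x * (e * B)"
      using assms(2)[OF x] by (simp add: abs_mult mult.assoc mult_left_mono)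
  qed
  also have "\<dots> = e * B" using assms(3) by (simp add: sum_distrib_right[symmetric])
  finally show ?thesis .
qed

theorem proposition1p7:
  fixes L :: "nat \<Rightarrow> 'a set"
    and pdown :: "'a \<Rightarrow> 'a \<Rightarrow> real"
    and M :: "nat \<Rightarrow> 'a \<Rightarrow> real"
    and \<iota> :: "nat \<Rightarrow> 'a \<Rightarrow> 'b::metric_space"
    and F :: "('b \<Rightarrow> real) set"
    and Fm :: "nat \<Rightarrow> ('b \<Rightarrow> real) set"
    and \<epsilon> :: "nat \<Rightarrow> real"
    and A :: "('b \<Rightarrow> real) \<Rightarrow> ('b \<Rightarrow> real)"
    and P :: "'b measure"
  assumes L_fin: "\<And>n. finite (L n)"
    and L_disj: "\<And>n m. n \<noteq> m \<Longrightarrow> L n \<inter> L m = {}"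
    and L0: "\<exists>z. L 0 = {z}"
    and pdown_nonneg: "\<And>lam mu. pdown lam mu \<ge> 0"
    and pdown_grade: "\<And>lam mu. pdown lam mu \<noteq> 0 \<Longrightarrow> (\<exists>n. lam \<in> L (Suc n) \<and> mu \<in> L n)"
    and pdown_sum: "\<And>n lam. lam \<in> L (Suc n) \<Longrightarrow> (\<Sum>mu\<in>L n. pdown lam mu) = 1"
    and M_pos: "\<And>n lam. lam \<in> L n \<Longrightarrow> M n lam > 0"
    and M_prob: "\<And>n. (\<Sum>lam\<in>L n. M n lam) = 1"
    and M_coherent: "\<And>n mu. mu \<in> L n \<Longrightarrow> (\<Sum>lam\<in>L (Suc n). M (Suc n) lam * pdown lam mu) = M n mu"
    and \<iota>_inj: "\<And>n. inj_on (\<iota> n) (L n)"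
    and A1: "compact (UNIV :: 'b set)"
    and A2: "\<And>U. open U \<Longrightarrow> U \<noteq> {} \<Longrightarrow> (\<forall>\<^sub>F n in sequentially. U \<inter> \<iota> n ` L n \<noteq> {})"
    and F_cont: "\<And>f. f \<in> F \<Longrightarrow> continuous_on UNIV f"
    and F_dense: "\<And>f e. continuous_on UNIV f \<Longrightarrow> e > 0 \<Longrightarrow> (\<exists>g\<in>F. \<forall>x. \<bar>f x - g x\<bar> < e)"
    and Fm_fd: "\<And>m. \<exists>B. finite B \<and> Fm m = fspan B"
    and Fm_mono: "\<And>m. Fm m \<subseteq> Fm (Suc m)"
    and Fm_exh: "(\<Union>m. Fm m) = F"
    and A3_inj: "\<And>m. \<forall>\<^sub>F n in sequentially. inj_on (proj \<iota> n) (Fm m)"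
    and A3_inv: "\<And>m. \<forall>\<^sub>F n in sequentially. \<forall>f\<in>Fm m. \<exists>g\<in>Fm m.
                    \<forall>lam\<in>L n. proj \<iota> n g lam = Top L M pdown n (proj \<iota> n f) lam"
    and eps_pos: "\<And>n. \<epsilon> n > 0"
    and eps_lim: "\<epsilon> \<longlonglongrightarrow> 0"
    and A4: "\<And>m f. f \<in> Fm m \<Longrightarrow> A f \<in> Fm m \<and>
              (\<forall>e>0. \<forall>\<^sub>F n in sequentially. \<forall>g\<in>Fm m.
                 (\<forall>lam\<in>L n. proj \<iota> n g lam = (Top L M pdown n (proj \<iota> n f) lam - proj \<iota> n f lam) / \<epsilon> n)
                 \<longrightarrow> (\<forall>x. \<bar>g x - A f x\<bar> \<le> e))"
    and A5: "(\<lambda>_. 1) \<in> F"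
    and P_prob: "prob_space P"
    and P_borel: "sets P = sets borel"
    and weak_conv: "\<And>f. continuous_on UNIV f \<Longrightarrow>
                      (\<lambda>n. \<Sum>lam\<in>L n. M n lam * f (\<iota> n lam)) \<longlonglongrightarrow> (\<integral>x. f x \<partial>P)"
  shows "\<forall>f\<in>F. \<forall>g\<in>F. (\<integral>x. A f x * g x \<partial>P) = (\<integral>x. f x * A g x \<partial>P)"
proof (intro ballI)
  fix f g assume f: "f \<in> F" and g: "g \<in> F"
  obtain m1 where m1: "f \<in> Fm m1" using f Fm_exh by blast
  obtain m2 where m2: "g \<in> Fm m2" using g Fm_exh by blast
  define m where "m = max m1 m2"
  have mono: "\<And>i j. i \<le> j \<Longrightarrow> Fm i \<subseteq> Fm j" using lift_Suc_mono_le[of Fm] Fm_mono by blast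
  have fm: "f \<in> Fm m" using mono[of m1 m] m1 unfolding m_def by auto
  have gm: "g \<in> Fm m" using mono[of m2 m] m2 unfolding m_def by auto
  have FmF: "Fm m \<subseteq> F" using Fm_exh by blast
  have Afm: "A f \<in> Fm m" using A4[OF fm] by blast
  have Agm: "A g \<in> Fm m" using A4[OF gm] by blast
  have cf: "continuous_on UNIV f" using F_cont f by blast
  have cg: "continuous_on UNIV g" using F_cont g by blast
  have cAf: "continuous_on UNIV (A f)" using F_cont Afm FmF by blast
  have cAg: "continuous_on UNIV (A g)" using F_cont Agm FmF by blast
  obtain Bf where Bf: "Bf \<ge> 0" "\<And>x. \<bar>f x\<bar> \<le> Bf"
    using continuous_on_compact_bound[OF A1 cf] by (metis UNIV_I real_norm_def)
  obtain Bg where Bg: "Bg \<ge> 0" "\<And>x. \<bar>g x\<bar> \<le> Bg"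
    using continuous_on_compact_bound[OF A1 cg] by (metis UNIV_I real_norm_def)
  define a where "a n = (\<Sum>lam\<in>L n. M n lam * (A f (\<iota> n lam) * g (\<iota> n lam)))" for n
  define b where "b n = (\<Sum>lam\<in>L n. M n lam * (f (\<iota> n lam) * A g (\<iota> n lam)))" for n
  have la: "a \<longlonglongrightarrow> (\<integral>x. A f x * g x \<partial>P)"
    unfolding a_def by (rule weak_conv) (intro continuous_on_mult cAf cg)
  have lb: "b \<longlonglongrightarrow> (\<integral>x. f x * A g x \<partial>P)"
    unfolding b_def by (rule weak_conv) (intro continuous_on_mult cf cAg)
  have Mnn: "\<And>n lam. lam \<in> L n \<Longrightarrow> M n lam \<ge> 0" using M_pos less_imp_le by blast
  have lab: "(\<lambda>n. a n - b n) \<longlonglongrightarrow> 0"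
    unfolding tendsto_iff
  proof (intro allI impI)
    fix r :: real assume r: "r > 0"
    define e where "e = r / (2 * (Bf + Bg + 1))"
    have e: "e > 0" using r Bf Bg unfolding e_def by simp
    have er: "e * (Bg + Bf) < r"
    proof -
      have "e * (Bg + Bf) < e * (2 * (Bf + Bg + 1))" using e Bf Bg by (intro mult_strict_left_mono) auto
      also have "\<dots> = r" unfolding e_def using Bf Bg by simp
      finally show ?thesis .
    qed
    have ev1: "\<forall>\<^sub>F n in sequentially. \<forall>G\<in>Fm m.
                 (\<forall>lam\<in>L n. proj \<iota> n G lam = (Top L M pdown n (proj \<iota> n f) lam - proj \<iota> n f lam) / \<epsilon> n)
                 \<longrightarrow> (\<forall>x. \<bar>G x - A f x\<bar> \<le> e)" using A4[OF fm] e by blast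
    have ev2: "\<forall>\<^sub>F n in sequentially. \<forall>G\<in>Fm m.
                 (\<forall>lam\<in>L n. proj \<iota> n G lam = (Top L M pdown n (proj \<iota> n g) lam - proj \<iota> n g lam) / \<epsilon> n)
                 \<longrightarrow> (\<forall>x. \<bar>G x - A g x\<bar> \<le> e)" using A4[OF gm] e by blast
    obtain BB where BB: "Fm m = fspan BB" using Fm_fd by blast
    show "\<forall>\<^sub>F n in sequentially. dist (a n - b n) 0 < r"
      using ev1 ev2 A3_inv[of m]
    proof eventually_elim
      case (elim n)
      have getG: "\<exists>G\<in>Fm m. \<forall>lam\<in>L n. G (\<iota> n lam) = (Top L M pdown n (proj \<iota> n h) lam - proj \<iota> n h lam) / \<epsilon> n"
        if h: "h \<in> Fm m" for h
      proof -
        obtain G1 where G1: "G1 \<in> Fm m" "\<forall>lam\<in>L n. proj \<iota> n G1 lam = Top L M pdown n (proj \<iota> n h) lam"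
          using elim(3) h by blast
        have "(\<lambda>x. (G1 x - h x) / \<epsilon> n) \<in> Fm m" using fspan_lin G1(1) h BB by metis
        moreover have "\<forall>lam\<in>L n. (G1 (\<iota> n lam) - h (\<iota> n lam)) / \<epsilon> n
             = (Top L M pdown n (proj \<iota> n h) lam - proj \<iota> n h lam) / \<epsilon> n"
          using G1(2) unfolding proj_def by simp
        ultimately show ?thesis by (intro bexI[of _ "\<lambda>x. (G1 x - h x) / \<epsilon> n"]) auto
      qed
      obtain Gf where Gf: "Gf \<in> Fm m" "\<forall>lam\<in>L n. Gf (\<iota> n lam) = (Top L M pdown n (proj \<iota> n f) lam - proj \<iota> n f lam) / \<epsilon> n"
        using getG[OF fm] by blast
      obtain Gg where Gg: "Gg \<in> Fm m" "\<forall>lam\<in>L n. Gg (\<iota> n lam) = (Top L M pdown n (proj \<iota> n g) lam - proj \<iota> n g lam) / \<epsilon> n"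
        using getG[OF gm] by blast
      have Gfb: "\<And>x. \<bar>Gf x - A f x\<bar> \<le> e" using elim(1) Gf unfolding proj_def by blast
      have Ggb: "\<And>x. \<bar>Gg x - A g x\<bar> \<le> e" using elim(2) Gg unfolding proj_def by blast
      define c where "c = (\<Sum>lam\<in>L n. M n lam * Gf (\<iota> n lam) * g (\<iota> n lam))"
      have c2: "c = (\<Sum>lam\<in>L n. M n lam * f (\<iota> n lam) * Gg (\<iota> n lam))"
      proof -
        have "c = (\<Sum>lam\<in>L n. M n lam * ((Top L M pdown n (proj \<iota> n f) lam - proj \<iota> n f lam) / \<epsilon> n) * proj \<iota> n g lam)"
          unfolding c_def using Gf(2) by (intro sum.cong) (auto simp: proj_def)
        also have "\<dots> = (\<Sum>lam\<in>L n. M n lam * proj \<iota> n f lam * ((Top L M pdown n (proj \<iota> n g) lam - proj \<iota> n g lam) / \<epsilon> n))"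
          by (rule Top_sym2) (use L_fin M_pos in auto)
        also have "\<dots> = (\<Sum>lam\<in>L n. M n lam * f (\<iota> n lam) * Gg (\<iota> n lam))"
          using Gg(2) by (intro sum.cong) (auto simp: proj_def)
        finally show ?thesis .
      qed
      have d1: "\<bar>a n - c\<bar> \<le> e * Bg"
      proof -
        have "a n - c = (\<Sum>lam\<in>L n. M n lam * (A f (\<iota> n lam) - Gf (\<iota> n lam)) * g (\<iota> n lam))"
          unfolding a_def c_def by (simp add: sum_subtractf[symmetric] algebra_simps)
        also have "\<bar>\<dots>\<bar> \<le> e * Bg"
          by (rule wsum_bound) (use L_fin Mnn M_prob Bg Gfb in \<open>auto simp: abs_minus_commute\<close>)
        finally show ?thesis .
      qed
      have d2: "\<bar>b n - c\<bar> \<le> e * Bf"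
      proof -
        have "b n - c = (\<Sum>lam\<in>L n. M n lam * (A g (\<iota> n lam) - Gg (\<iota> n lam)) * f (\<iota> n lam))"
          unfolding b_def c2 by (simp add: sum_subtractf[symmetric] algebra_simps)
        also have "\<bar>\<dots>\<bar> \<le> e * Bf"
          by (rule wsum_bound) (use L_fin Mnn M_prob Bf Ggb in \<open>auto simp: abs_minus_commute\<close>)
        finally show ?thesis .
      qed
      have "\<bar>a n - b n\<bar> \<le> e * (Bg + Bf)" using d1 d2 by (simp add: distrib_left)
      then show ?case using er by (simp add: dist_real_def)
    qed
  qed
  have "(\<lambda>n. a n - b n) \<longlonglongrightarrow> (\<integral>x. A f x * g x \<partial>P) - (\<integral>x. f x * A g x \<partial>P)"
    by (intro tendsto_diff la lb)
  with lab have "(\<integral>x. A f x * g x \<partial>P) - (\<integral>x. f x * A g x \<partial>P) = 0" using LIMSEQ_unique by blast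
  then show "(\<integral>x. A f x * g x \<partial>P) = (\<integral>x. f x * A g x \<partial>P)" by simp
qed

end
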